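(* Let $K\ge1$, let $\Pi_1,\dots,\Pi_K$ be arbitrary probability distributions on $\mathcal{X}^1\times\mathcal{Y}$, let $(q_1,\dots,q_K)$ be a probability vector, let $\alpha\in(0,1)$, and let $n_1,\dots,n_K\ge0$ be fixed integers with $n=\sum_k n_k$. Suppose calibration data $(X_1,Y_1),\dots,(X_n,Y_n)$ are generated independently with, for each $k$ and each $i\in\{n_1+\dots+n_{k-1}+1,\dots,n_1+\dots+n_k\}$, $X_i^0=k$ and $(X_i^1,Y_i)\sim\Pi_k$, and the test point $(X_{n+1},Y_{n+1})$ is drawn independently with $\mathbb{P}\{X^0_{n+1}=k\}=q_k$ and $(X^1_{n+1},Y_{n+1})\mid X^0_{n+1}=k\sim\Pi_k$. Let $s:\mathcal{X}\times\mathcal{Y}\to\mathbb{R}$ be any fixed measurable score function and let $\widehat{C}_n$ be the corrected GWCP prediction set defined in the context. Then $\mathbb{P}\{Y_{n+1}\in\widehat{C}_n(X_{n+1})\}\ge1-\alpha$.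
   Context: Features are $x=(x^0,x^1)\in[K]\times\mathcal{X}^1$ with $x^0$ the group label. For a probability distribution $\mu$ on $\mathbb{R}\cup\{+\infty\}$ and $\tau\in(0,1]$, $\textnormal{Quantile}_{\tau}(\mu)=\inf\{t\in\mathbb{R}\cup\{+\infty\}:\mu([-\infty,t])\ge\tau\}$, and $\textnormal{Quantile}_{\tau}(\mu)=+\infty$ for $\tau>1$; $\delta_s$ is the point mass at $s$. With $s_i=s(X_i,Y_i)$, $\widehat{P}^{(k)}_{\textnormal{score}}=\frac{1}{n_k}\sum_{i\le n:\,X_i^0=k}\delta_{s_i}$ if $n_k>0$ and $\widehat{P}^{(k)}_{\textnormal{score}}=\delta_{+\infty}$ if $n_k=0$. Set $\alpha_k=\alpha-q_k/n_k$ if $n_k>0$ and $\alpha_k=\alpha$ if $n_k=0$, and $\widehat{q}_k=\textnormal{Quantile}_{1-\alpha_k}\big(\sum_{j=1}^K q_j\widehat{P}^{(j)}_{\textnormal{score}}\big)$ (interpreted as $+\infty$ if $\alpha_k<0$). The corrected GWCP set is $\widehat{C}_n(x)=\{y\in\mathcal{Y}: s(x,y)\le\widehat{q}_k\}$ for any $x$ with $x^0=k$. *)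

theory Defs
  imports "HOL-Probability.Probability"
begin

text \<open>Group-indexed data: a data point is ((x0, x1), y) with group label x0 :: nat in {1..K}.
  Calibration data is a function D :: nat => ((nat * 'x) * 'y), used at indices 1..n.\<close>

text \<open>CDF (mass of [-infinity, t]) of the empirical score distribution of a group with index set I,
  which is the point mass at +infinity when the group is empty.\<close>
definition emp_cdf :: "nat set \<Rightarrow> (nat \<Rightarrow> real) \<Rightarrow> ereal \<Rightarrow> real" where
  "emp_cdf I sc t =
     (if card I = 0 then (if t = \<infinity> then 1 else 0)
      else real (card {i\<in>I. ereal (sc i) \<le> t}) / real (card I))"

text \<open>Quantile of a distribution on the extended reals given through its CDF F(t) = mu([-inf,t]):
  inf over t in R \<union> {+inf} with F t \<ge> tau, and +inf for tau > 1.\<close>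
definition Quantile_cdf :: "real \<Rightarrow> (ereal \<Rightarrow> real) \<Rightarrow> ereal" where
  "Quantile_cdf \<tau> F = (if \<tau> > 1 then \<infinity> else Inf {t. t \<noteq> -\<infinity> \<and> F t \<ge> \<tau>})"

definition gwcp_group :: "nat \<Rightarrow> (nat \<Rightarrow> (nat \<times> 'x) \<times> 'y) \<Rightarrow> nat \<Rightarrow> nat set" where
  "gwcp_group n D j = {i\<in>{1..n}. fst (fst (D i)) = j}"

definition gwcp_qhat ::
  "nat \<Rightarrow> (nat \<Rightarrow> real) \<Rightarrow> real \<Rightarrow> ((nat \<times> 'x) \<times> 'y \<Rightarrow> real) \<Rightarrow> nat
     \<Rightarrow> (nat \<Rightarrow> (nat \<times> 'x) \<times> 'y) \<Rightarrow> nat \<Rightarrow> ereal" where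
  "gwcp_qhat K q \<alpha> s n D k =
     (let nk = card (gwcp_group n D k);
          \<alpha>k = (if nk > 0 then \<alpha> - q k / real nk else \<alpha>)
      in if \<alpha>k < 0 then \<infinity>
         else Quantile_cdf (1 - \<alpha>k)
                (\<lambda>t. \<Sum>j=1..K. q j * emp_cdf (gwcp_group n D j) (\<lambda>i. s (D i)) t))"

definition gwcp_set ::
  "nat \<Rightarrow> (nat \<Rightarrow> real) \<Rightarrow> real \<Rightarrow> ((nat \<times> 'x) \<times> 'y \<Rightarrow> real) \<Rightarrow> nat
     \<Rightarrow> (nat \<Rightarrow> (nat \<times> 'x) \<times> 'y) \<Rightarrow> nat \<times> 'x \<Rightarrow> 'y set" where
  "gwcp_set K q \<alpha> s n D x = {y. ereal (s (x, y)) \<le> gwcp_qhat K q \<alpha> s n D (fst x)}"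

end

theory Submission
  imports Defs
begin

definition tlf :: "nat set \<Rightarrow> (nat \<Rightarrow> real) \<Rightarrow> real \<Rightarrow> real" where
  "tlf I sc t = (if card I = 0 then 1 else real (card {i\<in>I. sc i \<ge> t}) / real (card I))"

definition Tail :: "nat \<Rightarrow> (nat \<Rightarrow> real) \<Rightarrow> ((nat \<times> 'x) \<times> 'y \<Rightarrow> real) \<Rightarrow> nat
     \<Rightarrow> (nat \<Rightarrow> (nat \<times> 'x) \<times> 'y) \<Rightarrow> real \<Rightarrow> real" where
  "Tail K q s n D t = (\<Sum>j=1..K. q j * tlf (gwcp_group n D j) (\<lambda>i. s (D i)) t)"

definition mixF :: "nat \<Rightarrow> (nat \<Rightarrow> real) \<Rightarrow> ((nat \<times> 'x) \<times> 'y \<Rightarrow> real) \<Rightarrow> nat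
     \<Rightarrow> (nat \<Rightarrow> (nat \<times> 'x) \<times> 'y) \<Rightarrow> ereal \<Rightarrow> real" where
  "mixF K q s n D t = (\<Sum>j=1..K. q j * emp_cdf (gwcp_group n D j) (\<lambda>i. s (D i)) t)"

definition alk :: "(nat \<Rightarrow> real) \<Rightarrow> real \<Rightarrow> nat \<Rightarrow> (nat \<Rightarrow> (nat \<times> 'x) \<times> 'y) \<Rightarrow> nat \<Rightarrow> real" where
  "alk q \<alpha> n D k = (if card (gwcp_group n D k) > 0 then \<alpha> - q k / real (card (gwcp_group n D k)) else \<alpha>)"

lemma finite_group[simp]: "finite (gwcp_group n D j)"
  unfolding gwcp_group_def by auto

lemma group_sub: "gwcp_group n D j \<subseteq> {1..n}"
  unfolding gwcp_group_def by auto

lemma L1: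
  assumes "u < ereal T"
  shows "emp_cdf I sc u + tlf I sc T \<le> 1"
proof (cases "card I = 0")
  case True
  have "u \<noteq> \<infinity>" using assms by auto
  then show ?thesis using True by (simp add: emp_cdf_def tlf_def)
next
  case False
  hence fin: "finite I" by (metis card.infinite)
  have disj: "{i\<in>I. ereal (sc i) \<le> u} \<inter> {i\<in>I. sc i \<ge> T} = {}"
  proof -
    have False if "ereal (sc i) \<le> u" "T \<le> sc i" for i
    proof -
      have "ereal T \<le> ereal (sc i)" using that(2) by simp
      also have "\<dots> \<le> u" by fact
      finally show False using assms by simp
    qed
    then show ?thesis by blast
  qed
  have "card {i\<in>I. ereal (sc i) \<le> u} + card {i\<in>I. sc i \<ge> T} = card ({i\<in>I. ereal (sc i) \<le> u} \<union> {i\<in>I. sc i \<ge> T})"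
    using disj fin by (intro card_Un_disjoint[symmetric]) auto
  also have "\<dots> \<le> card I" using fin by (intro card_mono) auto
  finally have le: "real (card {i\<in>I. ereal (sc i) \<le> u}) + real (card {i\<in>I. sc i \<ge> T}) \<le> real (card I)"
    by (simp only: of_nat_add[symmetric] of_nat_le_iff)
  have "emp_cdf I sc u + tlf I sc T = (real (card {i\<in>I. ereal (sc i) \<le> u}) + real (card {i\<in>I. sc i \<ge> T})) / real (card I)"
    using False unfolding emp_cdf_def tlf_def by (simp add: add_divide_distrib)
  also have "\<dots> \<le> 1" using le False by simp
  finally show ?thesis .
qed

lemma L2:
  assumes "\<forall>l\<in>I. sc l \<le> u \<longleftrightarrow> sc l < T"
  shows "emp_cdf I sc (ereal u) + tlf I sc T = 1"
proof (cases "card I = 0")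
  case True
  then show ?thesis by (simp add: emp_cdf_def tlf_def)
next
  case False
  hence fin: "finite I" by (metis card.infinite)
  have eq: "{i\<in>I. ereal (sc i) \<le> ereal u} = I - {i\<in>I. sc i \<ge> T}"
  proof -
    have "ereal (sc i) \<le> ereal u \<longleftrightarrow> \<not> T \<le> sc i" if "i \<in> I" for i
      using assms[rule_format, OF that] by (simp add: not_le)
    then show ?thesis by blast
  qed
  have "card {i\<in>I. ereal (sc i) \<le> ereal u} = card I - card {i\<in>I. sc i \<ge> T}"
    unfolding eq using fin by (intro card_Diff_subset) auto
  moreover have "card {i\<in>I. sc i \<ge> T} \<le> card I" using fin by (intro card_mono) auto
  ultimately have le: "real (card {i\<in>I. ereal (sc i) \<le> ereal u}) + real (card {i\<in>I. sc i \<ge> T}) = real (card I)"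
    by (simp add: of_nat_diff)
  have "emp_cdf I sc (ereal u) + tlf I sc T = (real (card {i\<in>I. ereal (sc i) \<le> ereal u}) + real (card {i\<in>I. sc i \<ge> T})) / real (card I)"
    using False unfolding emp_cdf_def tlf_def by (simp add: add_divide_distrib)
  also have "\<dots> = 1" using le False by simp
  finally show ?thesis .
qed

lemma mix_L1:
  assumes q: "\<forall>k\<in>{1..K}. q k \<ge> 0" "(\<Sum>k=1..K. q k) = 1" and u: "u < ereal T"
  shows "mixF K q s n D u + Tail K q s n D T \<le> 1"
proof -
  have "mixF K q s n D u + Tail K q s n D T
      = (\<Sum>j=1..K. q j * (emp_cdf (gwcp_group n D j) (\<lambda>i. s (D i)) u + tlf (gwcp_group n D j) (\<lambda>i. s (D i)) T))"
    by (simp add: mixF_def Tail_def sum.distrib distrib_left)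
  also have "\<dots> \<le> (\<Sum>j=1..K. q j * 1)"
    using q L1[OF u] by (intro sum_mono mult_left_mono) auto
  finally show ?thesis using q by simp
qed

lemma mix_L2:
  assumes q: "(\<Sum>k=1..K. q k) = 1" and u: "\<forall>l\<in>{1..n}. s (D l) \<le> u \<longleftrightarrow> s (D l) < T"
  shows "mixF K q s n D (ereal u) + Tail K q s n D T = 1"
proof -
  have "mixF K q s n D (ereal u) + Tail K q s n D T
      = (\<Sum>j=1..K. q j * (emp_cdf (gwcp_group n D j) (\<lambda>i. s (D i)) (ereal u) + tlf (gwcp_group n D j) (\<lambda>i. s (D i)) T))"
    by (simp add: mixF_def Tail_def sum.distrib distrib_left)
  also have "\<dots> = (\<Sum>j=1..K. q j * 1)"
    using u group_sub by (intro sum.cong refl arg_cong2[where f="(*)"] L2) blast+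
  finally show ?thesis using q by simp
qed

lemma miss_iff:
  assumes q: "\<forall>k\<in>{1..K}. q k \<ge> 0" "(\<Sum>k=1..K. q k) = 1"
  shows "(\<not> ereal T \<le> gwcp_qhat K q \<alpha> s n D k) \<longleftrightarrow> (alk q \<alpha> n D k \<ge> 0 \<and> Tail K q s n D T \<le> alk q \<alpha> n D k)"
proof (cases "alk q \<alpha> n D k < 0")
  case True
  then show ?thesis by (simp add: gwcp_qhat_def alk_def Let_def)
next
  case False
  let ?S = "{t. t \<noteq> -\<infinity> \<and> mixF K q s n D t \<ge> 1 - alk q \<alpha> n D k}"
  have qh: "gwcp_qhat K q \<alpha> s n D k = Inf ?S"
    using False by (simp add: gwcp_qhat_def alk_def Let_def Quantile_cdf_def mixF_def)
  show ?thesis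
  proof
    assume "\<not> ereal T \<le> gwcp_qhat K q \<alpha> s n D k"
    hence "Inf ?S < ereal T" unfolding qh by simp
    then obtain u where u: "u \<in> ?S" "u < ereal T" by (auto simp: Inf_less_iff)
    have "Tail K q s n D T \<le> alk q \<alpha> n D k" using mix_L1[OF q u(2), of s n D] u(1) by auto
    then show "alk q \<alpha> n D k \<ge> 0 \<and> Tail K q s n D T \<le> alk q \<alpha> n D k" using False by simp
  next
    assume a: "alk q \<alpha> n D k \<ge> 0 \<and> Tail K q s n D T \<le> alk q \<alpha> n D k"
    define U where "U = insert (T - 1) {s (D l) |l. l \<in> {1..n} \<and> s (D l) < T}"
    have finU: "finite U" unfolding U_def by auto
    define u where "u = Max U"
    have uU: "u \<in> U" unfolding u_def using finU U_def by (intro Max_in) auto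
    have ult: "u < T" using uU unfolding U_def by auto
    have uprop: "\<forall>l\<in>{1..n}. s (D l) \<le> u \<longleftrightarrow> s (D l) < T"
    proof
      fix l assume l: "l \<in> {1..n}"
      show "s (D l) \<le> u \<longleftrightarrow> s (D l) < T"
      proof
        assume "s (D l) \<le> u" then show "s (D l) < T" using ult by linarith
      next
        assume "s (D l) < T"
        hence "s (D l) \<in> U" unfolding U_def using l by blast
        then show "s (D l) \<le> u" unfolding u_def using finU by (intro Max_ge)
      qed
    qed
    have "ereal u \<in> ?S" using mix_L2[OF q(2) uprop] a by auto
    hence "Inf ?S \<le> ereal u" by (rule Inf_lower)
    also have "\<dots> < ereal T" using ult by simp
    finally show "\<not> ereal T \<le> gwcp_qhat K q \<alpha> s n D k" unfolding qh by simp
  qed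
qed


lemma group_upd:
  assumes "i \<in> gwcp_group n D k" "fst (fst z) = k"
  shows "gwcp_group n (D(i:=z)) j = gwcp_group n D j"
  using assms unfolding gwcp_group_def by auto

lemma group_cong:
  assumes "\<forall>l\<in>{1..n}. D l = D' l"
  shows "gwcp_group n D j = gwcp_group n D' j"
  using assms unfolding gwcp_group_def by auto

lemma Tail_cong:
  assumes "\<forall>l\<in>{1..n}. D l = D' l"
  shows "Tail K q s n D t = Tail K q s n D' t"
proof -
  have "tlf (gwcp_group n D j) (\<lambda>i. s (D i)) t = tlf (gwcp_group n D' j) (\<lambda>i. s (D' i)) t" for j
  proof -
    have "{i \<in> gwcp_group n D j. t \<le> s (D i)} = {i \<in> gwcp_group n D' j. t \<le> s (D' i)}"
      using assms group_sub[of n D j] group_cong[OF assms, of j] by auto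
    then show ?thesis unfolding tlf_def using group_cong[OF assms, of j] by simp
  qed
  then show ?thesis unfolding Tail_def by simp
qed

lemma alk_cong:
  assumes "\<forall>l\<in>{1..n}. D l = D' l"
  shows "alk q \<alpha> n D k = alk q \<alpha> n D' k"
  unfolding alk_def using group_cong[OF assms] by simp

lemma tlf_swap:
  assumes "i \<in> I" "finite I"
  shows "tlf I (sc(i:=v)) t \<le> tlf I sc t + 1 / real (card I)"
proof -
  have cI: "card I > 0" using assms by (auto simp: card_gt_0_iff)
  have "{l\<in>I. t \<le> (sc(i:=v)) l} \<subseteq> insert i {l\<in>I. t \<le> sc l}" by auto
  hence "card {l\<in>I. t \<le> (sc(i:=v)) l} \<le> card (insert i {l\<in>I. t \<le> sc l})"
    using assms by (intro card_mono) auto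
  also have "\<dots> \<le> card {l\<in>I. t \<le> sc l} + 1" by (simp add: card_insert_le_m1)
  finally have "real (card {l\<in>I. t \<le> (sc(i:=v)) l}) \<le> real (card {l\<in>I. t \<le> sc l}) + 1" by linarith
  then show ?thesis using cI unfolding tlf_def
    by (simp add: add_divide_distrib[symmetric] divide_right_mono)
qed

lemma L3:
  assumes k: "k \<in> {1..K}" and q: "\<forall>k\<in>{1..K}. q k \<ge> 0"
    and z: "fst (fst z) = k" and i: "i \<in> gwcp_group n D k"
    and miss: "Tail K q s n D (s z) \<le> alk q \<alpha> n D k"
  shows "Tail K q s n (D(i:=z)) (s z) \<le> \<alpha>"
proof -
  let ?c = "card (gwcp_group n D k)"
  have c: "?c > 0" using i by (auto simp: card_gt_0_iff)
  have al: "alk q \<alpha> n D k = \<alpha> - q k / real ?c" using c by (simp add: alk_def)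
  have ge: "gwcp_group n (D(i:=z)) j = gwcp_group n D j" for j by (rule group_upd[OF i z])
  have sc: "(\<lambda>l. s ((D(i:=z)) l)) = (\<lambda>l. s (D l))(i := s z)" by auto
  have tm: "q j * tlf (gwcp_group n (D(i:=z)) j) (\<lambda>l. s ((D(i:=z)) l)) (s z)
      \<le> q j * tlf (gwcp_group n D j) (\<lambda>l. s (D l)) (s z) + (if j = k then q k / real ?c else 0)"
    if j: "j \<in> {1..K}" for j
  proof (cases "j = k")
    case True
    show ?thesis unfolding ge sc True
      using mult_left_mono[OF tlf_swap[OF i finite_group, of "\<lambda>l. s (D l)" "s z" "s z"], of "q k"] q k
      by (simp add: distrib_left)
  next
    case False
    have "i \<notin> gwcp_group n D j" using i False unfolding gwcp_group_def by auto
    hence "{l \<in> gwcp_group n D j. s z \<le> ((\<lambda>l. s (D l))(i := s z)) l} = {l \<in> gwcp_group n D j. s z \<le> s (D l)}"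
      by auto
    then show ?thesis unfolding ge sc tlf_def using False by simp
  qed
  have "Tail K q s n (D(i:=z)) (s z) \<le> (\<Sum>j=1..K. q j * tlf (gwcp_group n D j) (\<lambda>l. s (D l)) (s z) + (if j = k then q k / real ?c else 0))"
    unfolding Tail_def using tm by (intro sum_mono) auto
  also have "\<dots> = Tail K q s n D (s z) + q k / real ?c"
    using k by (simp add: sum.distrib Tail_def)
  finally show ?thesis using miss al by simp
qed

definition qE :: "nat \<Rightarrow> (nat \<Rightarrow> real) \<Rightarrow> nat \<Rightarrow> (nat \<Rightarrow> (nat \<times> 'x) \<times> 'y) \<Rightarrow> real" where
  "qE K q n D = (\<Sum>j\<in>{j\<in>{1..K}. card (gwcp_group n D j) = 0}. q j)"

lemma tlf_nonneg: "tlf I sc t \<ge> 0" unfolding tlf_def by auto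

lemma tlf_le1: "tlf I sc t \<le> 1"
proof (cases "card I = 0")
  case False
  hence "finite I" by (metis card.infinite)
  hence "card {i\<in>I. t \<le> sc i} \<le> card I" by (intro card_mono) auto
  then show ?thesis using False unfolding tlf_def by simp
qed (simp add: tlf_def)

lemma Tail_ge_qE:
  assumes q: "\<forall>k\<in>{1..K}. q k \<ge> 0"
  shows "Tail K q s n D t \<ge> qE K q n D"
proof -
  have "qE K q n D = (\<Sum>j=1..K. if card (gwcp_group n D j) = 0 then q j else 0)"
    unfolding qE_def by (simp add: sum.If_cases Int_def)
  also have "\<dots> \<le> Tail K q s n D t" unfolding Tail_def
    using q tlf_nonneg by (intro sum_mono) (auto simp: tlf_def)
  finally show ?thesis .
qed

lemma L4:
  assumes q: "\<forall>k\<in>{1..K}. q k \<ge> 0"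
    and c: "card (gwcp_group n D k) = 0"
    and miss: "Tail K q s n D T \<le> alk q \<alpha> n D k"
  shows "qE K q n D \<le> \<alpha>"
  using Tail_ge_qE[OF q, where s=s and n=n and D=D and t=T] miss c by (simp add: alk_def)

lemma tlf_mono: "t \<le> t' \<Longrightarrow> tlf I sc t' \<le> tlf I sc t"
proof (cases "card I = 0")
  case False
  assume tt: "t \<le> t'"
  hence "finite I" using False by (metis card.infinite)
  hence "card {i\<in>I. t' \<le> sc i} \<le> card {i\<in>I. t \<le> sc i}" using tt by (intro card_mono) auto
  then show ?thesis using False unfolding tlf_def by (simp add: divide_right_mono)
qed (simp add: tlf_def)

lemma Tail_mono:
  assumes q: "\<forall>k\<in>{1..K}. q k \<ge> 0" and "t \<le> t'"
  shows "Tail K q s n D t' \<le> Tail K q s n D t"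
  unfolding Tail_def using q tlf_mono[OF assms(2)] by (intro sum_mono mult_left_mono) auto

lemma sum_split_P:
  assumes "finite A"
  shows "sum f A = sum f {x\<in>A. P x} + sum f {x\<in>A. \<not> P x}"
proof -
  have "A = {x\<in>A. P x} \<union> {x\<in>A. \<not> P x}" by auto
  then have "sum f A = sum f ({x\<in>A. P x} \<union> {x\<in>A. \<not> P x})" by (rule arg_cong[where f="sum f"])
  also have "\<dots> = sum f {x\<in>A. P x} + sum f {x\<in>A. \<not> P x}" using assms by (intro sum.union_disjoint) auto
  finally show ?thesis .
qed

lemma L5:
  assumes q: "\<forall>k\<in>{1..K}. q k \<ge> 0" and a: "\<alpha> \<ge> 0"
  shows "(\<Sum>j\<in>{j\<in>{1..K}. card (gwcp_group n D j) > 0}.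
            q j / real (card (gwcp_group n D j)) * real (card {i\<in>gwcp_group n D j. Tail K q s n D (s (D i)) \<le> \<alpha>}))
         + (if qE K q n D \<le> \<alpha> then qE K q n D else 0) \<le> \<alpha>"
proof -
  let ?G = "\<lambda>j. gwcp_group n D j"
  let ?P = "{j\<in>{1..K}. card (?G j) > 0}"
  define A where "A = {i\<in>{1..n}. fst (fst (D i)) \<in> {1..K} \<and> Tail K q s n D (s (D i)) \<le> \<alpha>}"
  have qE0: "qE K q n D \<ge> 0" unfolding qE_def using q by (intro sum_nonneg) auto
  have ifle: "(if qE K q n D \<le> \<alpha> then qE K q n D else 0) \<le> qE K q n D" using qE0 by auto
  show ?thesis
  proof (cases "A = {}")
    case True
    have "{i\<in>?G j. Tail K q s n D (s (D i)) \<le> \<alpha>} = {}" if "j \<in> {1..K}" for j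
      using True that unfolding A_def gwcp_group_def by auto
    hence "(\<Sum>j\<in>?P. q j / real (card (?G j)) * real (card {i\<in>?G j. Tail K q s n D (s (D i)) \<le> \<alpha>})) = 0"
      by (intro sum.neutral) auto
    then show ?thesis using a by simp
  next
    case False
    have finA: "finite A" unfolding A_def by auto
    define m where "m = Min ((\<lambda>i. s (D i)) ` A)"
    have "m \<in> (\<lambda>i. s (D i)) ` A" unfolding m_def using finA False by (intro Min_in) auto
    then obtain i0 where i0: "i0 \<in> A" "m = s (D i0)" by auto
    have Tm: "Tail K q s n D m \<le> \<alpha>" using i0 unfolding A_def by auto
    have seteq: "{i\<in>?G j. Tail K q s n D (s (D i)) \<le> \<alpha>} = {i\<in>?G j. m \<le> s (D i)}" if j: "j \<in> {1..K}" for j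
    proof safe
      fix i assume "i \<in> ?G j" "Tail K q s n D (s (D i)) \<le> \<alpha>"
      hence "i \<in> A" using j unfolding A_def gwcp_group_def by auto
      then show "m \<le> s (D i)" unfolding m_def using finA by (intro Min_le) auto
    next
      fix i assume "i \<in> ?G j" "m \<le> s (D i)"
      then show "Tail K q s n D (s (D i)) \<le> \<alpha>" using Tail_mono[OF q, of m "s (D i)" s n D] Tm by simp
    qed
    have "(\<Sum>j\<in>?P. q j / real (card (?G j)) * real (card {i\<in>?G j. Tail K q s n D (s (D i)) \<le> \<alpha>}))
        = (\<Sum>j\<in>?P. q j * tlf (?G j) (\<lambda>i. s (D i)) m)"
      using seteq by (intro sum.cong refl) (auto simp: tlf_def)
    also have "\<dots> + qE K q n D = Tail K q s n D m"
    proof -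
      have "Tail K q s n D m = (\<Sum>j\<in>?P. q j * tlf (?G j) (\<lambda>i. s (D i)) m)
          + (\<Sum>j\<in>{j\<in>{1..K}. \<not> card (?G j) > 0}. q j * tlf (?G j) (\<lambda>i. s (D i)) m)"
        unfolding Tail_def by (rule sum_split_P) simp
      moreover have "(\<Sum>j\<in>{j\<in>{1..K}. \<not> card (?G j) > 0}. q j * tlf (?G j) (\<lambda>i. s (D i)) m) = qE K q n D"
        unfolding qE_def by (intro sum.cong) (auto simp: tlf_def)
      ultimately show ?thesis by simp
    qed
    finally show ?thesis using Tm ifle by linarith
  qed
qed

lemma card_filter_sum:
  assumes "finite A" shows "real (card {x\<in>A. P x}) = (\<Sum>x\<in>A. if P x then 1 else 0)"
proof -
  have "real (card {x\<in>A. P x}) = (\<Sum>x\<in>{x\<in>A. P x}. (1::real))" by simp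
  also have "\<dots> = (\<Sum>x\<in>A. if P x then 1 else 0)" using assms by (rule sum.inter_filter)
  finally show ?thesis .
qed

lemma card_group_sum:
  "real (card (gwcp_group n D j)) = (\<Sum>l\<in>{1..n}. if fst (fst (D l)) = j then 1 else 0)"
  unfolding gwcp_group_def by (rule card_filter_sum) simp

lemma card_group_tail_sum:
  "real (card {i\<in>gwcp_group n D j. t \<le> s (D i)}) = (\<Sum>l\<in>{1..n}. if fst (fst (D l)) = j \<and> t \<le> s (D l) then 1 else 0)"
proof -
  have "{i\<in>gwcp_group n D j. t \<le> s (D i)} = {l\<in>{1..n}. fst (fst (D l)) = j \<and> t \<le> s (D l)}"
    unfolding gwcp_group_def by auto
  then show ?thesis using card_filter_sum[OF finite_atLeastAtMost, of 1 n "\<lambda>l. fst (fst (D l)) = j \<and> t \<le> s (D l)"] by simp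
qed

lemma Tail_alt:
  "Tail K q s n D t = (\<Sum>j=1..K. q j * (if (\<Sum>l\<in>{1..n}. if fst (fst (D l)) = j then 1 else 0) = (0::real) then 1
      else (\<Sum>l\<in>{1..n}. if fst (fst (D l)) = j \<and> t \<le> s (D l) then 1 else 0) / (\<Sum>l\<in>{1..n}. if fst (fst (D l)) = j then 1 else (0::real))))"
  unfolding Tail_def tlf_def card_group_sum[symmetric] card_group_tail_sum[symmetric] by simp

lemma Tail_meas:
  fixes Dw :: "'o \<Rightarrow> nat \<Rightarrow> (nat \<times> 'x) \<times> 'y"
  assumes Dm: "\<And>l. l\<in>{1..n} \<Longrightarrow> (\<lambda>\<omega>. Dw \<omega> l) \<in> \<Omega> \<rightarrow>\<^sub>M ((count_space UNIV \<Otimes>\<^sub>M M1) \<Otimes>\<^sub>M MY)"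
    and tm: "t \<in> borel_measurable \<Omega>"
    and sm: "s \<in> borel_measurable ((count_space UNIV \<Otimes>\<^sub>M M1) \<Otimes>\<^sub>M MY)"
  shows "(\<lambda>\<omega>. Tail K q s n (Dw \<omega>) (t \<omega>)) \<in> borel_measurable \<Omega>"
proof -
  have lab[measurable]: "(\<lambda>\<omega>. fst (fst (Dw \<omega> l))) \<in> \<Omega> \<rightarrow>\<^sub>M count_space UNIV" if "l \<in> {1..n}" for l
    using Dm[OF that] by measurable
  have sc[measurable]: "(\<lambda>\<omega>. s (Dw \<omega> l)) \<in> borel_measurable \<Omega>" if "l \<in> {1..n}" for l
    using Dm[OF that] sm by measurable
  have a: "(\<lambda>\<omega>. \<Sum>l\<in>{1..n}. if fst (fst (Dw \<omega> l)) = j then 1 else (0::real)) \<in> borel_measurable \<Omega>" for j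
  proof (intro borel_measurable_sum)
    fix l assume l: "l \<in> {1..n}"
    note [measurable] = lab[OF l] sc[OF l]
    show "(\<lambda>\<omega>. if fst (fst (Dw \<omega> l)) = j then 1 else (0::real)) \<in> borel_measurable \<Omega>" by measurable
  qed
  have b: "(\<lambda>\<omega>. \<Sum>l\<in>{1..n}. if fst (fst (Dw \<omega> l)) = j \<and> t \<omega> \<le> s (Dw \<omega> l) then 1 else (0::real)) \<in> borel_measurable \<Omega>" for j
  proof (intro borel_measurable_sum)
    fix l assume l: "l \<in> {1..n}"
    note [measurable] = lab[OF l] sc[OF l] tm
    show "(\<lambda>\<omega>. if fst (fst (Dw \<omega> l)) = j \<and> t \<omega> \<le> s (Dw \<omega> l) then 1 else (0::real)) \<in> borel_measurable \<Omega>" by measurable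
  qed
  show ?thesis unfolding Tail_alt using a b tm by measurable
qed


lemma alk_alt:
  "alk q \<alpha> n D k = (if (\<Sum>l\<in>{1..n}. if fst (fst (D l)) = k then 1 else (0::real)) > 0
      then \<alpha> - q k / (\<Sum>l\<in>{1..n}. if fst (fst (D l)) = k then 1 else (0::real)) else \<alpha>)"
  unfolding alk_def card_group_sum[symmetric] by simp

lemma alk_meas:
  fixes Dw :: "'o \<Rightarrow> nat \<Rightarrow> (nat \<times> 'x) \<times> 'y"
  assumes Dm: "\<And>l. l\<in>{1..n} \<Longrightarrow> (\<lambda>\<omega>. Dw \<omega> l) \<in> \<Omega> \<rightarrow>\<^sub>M ((count_space UNIV \<Otimes>\<^sub>M M1) \<Otimes>\<^sub>M MY)"
  shows "(\<lambda>\<omega>. alk q \<alpha> n (Dw \<omega>) k) \<in> borel_measurable \<Omega>"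
proof -
  have lab[measurable]: "(\<lambda>\<omega>. fst (fst (Dw \<omega> l))) \<in> \<Omega> \<rightarrow>\<^sub>M count_space UNIV" if "l \<in> {1..n}" for l
    using Dm[OF that] by measurable
  have a: "(\<lambda>\<omega>. \<Sum>l\<in>{1..n}. if fst (fst (Dw \<omega> l)) = k then 1 else (0::real)) \<in> borel_measurable \<Omega>"
  proof (intro borel_measurable_sum)
    fix l assume l: "l \<in> {1..n}"
    note [measurable] = lab[OF l]
    show "(\<lambda>\<omega>. if fst (fst (Dw \<omega> l)) = k then 1 else (0::real)) \<in> borel_measurable \<Omega>" by measurable
  qed
  show ?thesis unfolding alk_alt using a by measurable
qed

lemma (in prob_space) swap_core:
  assumes iv1: "indep_var PJ V N W" and iv2: "indep_var PJ V N W'"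
    and G: "G \<in> sets (PJ \<Otimes>\<^sub>M N)" and Gf: "G \<subseteq> {p. f (snd p)}"
    and h: "\<And>B. B \<in> sets N \<Longrightarrow> B \<subseteq> {z. f z} \<Longrightarrow>
        emeasure M (W -` B \<inter> space M) = ennreal c * emeasure M (W' -` B \<inter> space M)"
  shows "emeasure M ((\<lambda>\<omega>. (V \<omega>, W \<omega>)) -` G \<inter> space M) = ennreal c * emeasure M ((\<lambda>\<omega>. (V \<omega>, W' \<omega>)) -` G \<inter> space M)"
proof -
  have rv: "random_variable PJ V" "random_variable N W" "random_variable N W'"
    using iv1 iv2 indep_var_rv1 indep_var_rv2 by auto
  interpret PW: prob_space "distr M N W" by (rule prob_space_distr) (rule rv(2))
  interpret PW': prob_space "distr M N W'" by (rule prob_space_distr) (rule rv(3))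
  have eq1: "distr M PJ V \<Otimes>\<^sub>M distr M N W = distr M (PJ \<Otimes>\<^sub>M N) (\<lambda>x. (V x, W x))"
    using iv1 indep_var_distribution_eq by blast
  have eq2: "distr M PJ V \<Otimes>\<^sub>M distr M N W' = distr M (PJ \<Otimes>\<^sub>M N) (\<lambda>x. (V x, W' x))"
    using iv2 indep_var_distribution_eq by blast
  have s1: "sets (distr M PJ V \<Otimes>\<^sub>M distr M N W) = sets (PJ \<Otimes>\<^sub>M N)"
    by (intro sets_pair_measure_cong) simp_all
  have s2: "sets (distr M PJ V \<Otimes>\<^sub>M distr M N W') = sets (PJ \<Otimes>\<^sub>M N)"
    by (intro sets_pair_measure_cong) simp_all
  have m1: "(\<lambda>x. (V x, W x)) \<in> M \<rightarrow>\<^sub>M PJ \<Otimes>\<^sub>M N" using rv by measurable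
  have m2: "(\<lambda>x. (V x, W' x)) \<in> M \<rightarrow>\<^sub>M PJ \<Otimes>\<^sub>M N" using rv by measurable
  have "emeasure M ((\<lambda>\<omega>. (V \<omega>, W \<omega>)) -` G \<inter> space M) = emeasure (distr M (PJ \<Otimes>\<^sub>M N) (\<lambda>x. (V x, W x))) G"
    by (rule emeasure_distr[symmetric, OF m1 G])
  also have "\<dots> = emeasure (distr M PJ V \<Otimes>\<^sub>M distr M N W) G" by (simp add: eq1)
  also have "\<dots> = (\<integral>\<^sup>+ v. emeasure (distr M N W) (Pair v -` G) \<partial>distr M PJ V)"
    by (rule PW.emeasure_pair_measure_alt) (simp add: s1 G)
  also have "\<dots> = (\<integral>\<^sup>+ v. ennreal c * emeasure (distr M N W') (Pair v -` G) \<partial>distr M PJ V)"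
  proof (rule nn_integral_cong)
    fix v
    have B: "Pair v -` G \<in> sets N" using sets_Pair1[OF G] .
    have "Pair v -` G \<subseteq> {z. f z}" using Gf by auto
    then show "emeasure (distr M N W) (Pair v -` G) = ennreal c * emeasure (distr M N W') (Pair v -` G)"
      using h[OF B] B rv by (simp add: emeasure_distr)
  qed
  also have "\<dots> = ennreal c * (\<integral>\<^sup>+ v. emeasure (distr M N W') (Pair v -` G) \<partial>distr M PJ V)"
  proof (rule nn_integral_cmult)
    have "G \<in> sets (distr M PJ V \<Otimes>\<^sub>M distr M N W')" using s2 G by simp
    then show "(\<lambda>v. emeasure (distr M N W') (Pair v -` G)) \<in> borel_measurable (distr M PJ V)"
      by (rule PW'.measurable_emeasure_Pair)
  qed
  also have "(\<integral>\<^sup>+ v. emeasure (distr M N W') (Pair v -` G) \<partial>distr M PJ V) = emeasure (distr M PJ V \<Otimes>\<^sub>M distr M N W') G"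
    by (rule PW'.emeasure_pair_measure_alt[symmetric]) (simp add: s2 G)
  also have "\<dots> = emeasure (distr M (PJ \<Otimes>\<^sub>M N) (\<lambda>x. (V x, W' x))) G" by (simp add: eq2)
  also have "\<dots> = emeasure M ((\<lambda>\<omega>. (V \<omega>, W' \<omega>)) -` G \<inter> space M)"
    by (rule emeasure_distr[OF m2 G])
  finally show ?thesis .
qed

lemma sum_Suc_split:
  fixes nk :: "nat \<Rightarrow> nat"
  assumes "k \<ge> 1"
  shows "(\<Sum>j=1..k. nk j) = (\<Sum>j=1..<k. nk j) + nk k"
proof -
  have "{1..k} = {1..<Suc k}" by auto
  then have "(\<Sum>j=1..k. nk j) = (\<Sum>j=1..<Suc k. nk j)" by simp
  also have "\<dots> = (\<Sum>j=1..<k. nk j) + nk k" using assms by (simp add: sum.atLeastLessThan_Suc)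
  finally show ?thesis .
qed

lemma blk_card:
  fixes nk :: "nat \<Rightarrow> nat"
  assumes "k \<ge> 1"
  shows "card {(\<Sum>j=1..<k. nk j) + 1 .. (\<Sum>j=1..k. nk j)} = nk k"
  using sum_Suc_split[OF assms, of nk] by simp

lemma blk_sub:
  fixes nk :: "nat \<Rightarrow> nat"
  assumes "k \<in> {1..K}"
  shows "{(\<Sum>j=1..<k. nk j) + 1 .. (\<Sum>j=1..k. nk j)} \<subseteq> {1..(\<Sum>j=1..K. nk j)}"
proof -
  have "(\<Sum>j=1..k. nk j) \<le> (\<Sum>j=1..K. nk j)" using assms by (intro sum_mono2) auto
  then show ?thesis by auto
qed

lemma blk_disj:
  fixes nk :: "nat \<Rightarrow> nat"
  assumes "k < k'"
  shows "{(\<Sum>j=1..<k. nk j) + 1 .. (\<Sum>j=1..k. nk j)} \<inter> {(\<Sum>j=1..<k'. nk j) + 1 .. (\<Sum>j=1..k'. nk j)} = {}"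
proof -
  have "(\<Sum>j=1..k. nk j) \<le> (\<Sum>j=1..<k'. nk j)" using assms by (intro sum_mono2) auto
  then show ?thesis by auto
qed

lemma blk_cover:
  fixes nk :: "nat \<Rightarrow> nat"
  assumes "i \<in> {1..(\<Sum>j=1..K. nk j)}"
  shows "\<exists>k\<in>{1..K}. i \<in> {(\<Sum>j=1..<k. nk j) + 1 .. (\<Sum>j=1..k. nk j)}"
proof -
  define k where "k = (LEAST k. i \<le> (\<Sum>j=1..k. nk j))"
  have ex: "i \<le> (\<Sum>j=1..K. nk j)" using assms by auto
  have k1: "i \<le> (\<Sum>j=1..k. nk j)" unfolding k_def by (rule LeastI[of _ K]) (rule ex)
  have kK: "k \<le> K" unfolding k_def by (rule Least_le) (rule ex)
  have k0: "k \<noteq> 0"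
  proof
    assume "k = 0"
    then have "(\<Sum>j=1..k. nk j) = 0" by simp
    then show False using k1 assms by simp
  qed
  then obtain m where m: "k = Suc m" by (cases k) auto
  have "\<not> i \<le> (\<Sum>j=1..m. nk j)" unfolding k_def
    using not_less_Least[of m "\<lambda>k. i \<le> (\<Sum>j=1..k. nk j)"] m k_def by auto
  moreover have "{1..<k} = {1..m}" using m by auto
  ultimately have "(\<Sum>j=1..<k. nk j) < i" by simp
  then show ?thesis using k1 kK k0 by (intro bexI[of _ k]) auto
qed

theorem theorem3:
  fixes M :: "'a measure" and M1 :: "'x measure" and MY :: "'y measure"
    and Pk :: "nat \<Rightarrow> ('x \<times> 'y) measure"
    and q :: "nat \<Rightarrow> real" and \<alpha> :: real and K :: nat
    and nk :: "nat \<Rightarrow> nat" and n :: nat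
    and Z :: "nat \<Rightarrow> 'a \<Rightarrow> (nat \<times> 'x) \<times> 'y"
    and s :: "(nat \<times> 'x) \<times> 'y \<Rightarrow> real"
  assumes K: "K \<ge> 1"
    and M: "prob_space M"
    and Pi: "\<forall>k\<in>{1..K}. prob_space (Pk k) \<and> sets (Pk k) = sets (M1 \<Otimes>\<^sub>M MY)"
    and q_nonneg: "\<forall>k\<in>{1..K}. q k \<ge> 0"
    and q_sum: "(\<Sum>k=1..K. q k) = 1"
    and alpha: "0 < \<alpha>" "\<alpha> < 1"
    and n: "n = (\<Sum>k=1..K. nk k)"
    and s_meas: "s \<in> borel_measurable ((count_space UNIV \<Otimes>\<^sub>M M1) \<Otimes>\<^sub>M MY)"
    and indep: "prob_space.indep_vars M (\<lambda>_. (count_space UNIV \<Otimes>\<^sub>M M1) \<Otimes>\<^sub>M MY) Z {1..n+1}"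
    and calib: "\<forall>k\<in>{1..K}. \<forall>i\<in>{(\<Sum>j=1..<k. nk j) + 1 .. (\<Sum>j=1..k. nk j)}.
        distr M ((count_space UNIV \<Otimes>\<^sub>M M1) \<Otimes>\<^sub>M MY) (Z i)
          = distr (Pk k) ((count_space UNIV \<Otimes>\<^sub>M M1) \<Otimes>\<^sub>M MY) (\<lambda>(x1, y). ((k, x1), y))"
    and test: "\<forall>k\<in>{1..K}. \<forall>A\<in>sets (M1 \<Otimes>\<^sub>M MY).
        measure M {\<omega>\<in>space M. fst (fst (Z (n+1) \<omega>)) = k
                      \<and> (snd (fst (Z (n+1) \<omega>)), snd (Z (n+1) \<omega>)) \<in> A}
          = q k * measure (Pk k) A"
  shows "measure M {\<omega>\<in>space M.
           snd (Z (n+1) \<omega>) \<in> gwcp_set K q \<alpha> s n (\<lambda>i. Z i \<omega>) (fst (Z (n+1) \<omega>))} \<ge> 1 - \<alpha>"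
proof -
  interpret P: prob_space M by (rule M)
  define N where "N = (count_space (UNIV::nat set) \<Otimes>\<^sub>M M1) \<Otimes>\<^sub>M MY"
  define blk where "blk k = {(\<Sum>j=1..<k. nk j) + 1 .. (\<Sum>j=1..k. nk j)}" for k
  define D where "D \<omega> = (\<lambda>i. Z i \<omega>)" for \<omega>
  have indep': "P.indep_vars (\<lambda>_. N) Z {1..n+1}" using indep unfolding N_def .
  have Zm: "Z l \<in> M \<rightarrow>\<^sub>M N" if "l \<in> {1..n+1}" for l
    using indep' that unfolding P.indep_vars_def by auto
  have Zm'[measurable]: "Z l \<in> M \<rightarrow>\<^sub>M (count_space UNIV \<Otimes>\<^sub>M M1) \<Otimes>\<^sub>M MY" if "l \<in> {1..n+1}" for l
    using Zm[OF that] unfolding N_def .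
  have sm[measurable]: "s \<in> borel_measurable N" using s_meas unfolding N_def .
  have qk0: "q k \<ge> 0" if "k \<in> {1..K}" for k using q_nonneg that by auto
  have blk_card': "card (blk k) = nk k" if "k \<in> {1..K}" for k
    unfolding blk_def using blk_card[where nk=nk and k=k] that by auto
  have blk_sub': "blk k \<subseteq> {1..n}" if "k \<in> {1..K}" for k
    unfolding blk_def n using blk_sub[OF that, where nk=nk] .
  have blk_cover': "\<exists>k\<in>{1..K}. i \<in> blk k" if "i \<in> {1..n}" for i
    unfolding blk_def using blk_cover[where nk=nk and i=i and K=K] that n by auto
  have blk_disj': "blk k \<inter> blk k' = {}" if "k \<noteq> k'" for k k'
  proof (cases "k < k'")
    case True then show ?thesis unfolding blk_def by (rule blk_disj)
  next
    case False then have "k' < k" using that by auto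
    then show ?thesis unfolding blk_def using blk_disj[where nk=nk and k=k' and k'=k] by auto
  qed
  have finblk: "finite (blk k)" for k unfolding blk_def by simp

  define Good where "Good = {\<omega>\<in>space M. \<forall>k\<in>{1..K}. \<forall>i\<in>blk k. fst (fst (Z i \<omega>)) = k}"
  have fmeas: "(\<lambda>(x1, y). ((k, x1), y)) \<in> Pk k \<rightarrow>\<^sub>M N" if k: "k \<in> {1..K}" for k
  proof -
    have "(\<lambda>(x1, y). ((k, x1), y)) \<in> (M1 \<Otimes>\<^sub>M MY) \<rightarrow>\<^sub>M N" unfolding N_def by measurable
    moreover have "sets (Pk k) = sets (M1 \<Otimes>\<^sub>M MY)" using Pi k by auto
    ultimately show ?thesis using measurable_cong_sets[of "Pk k" "M1 \<Otimes>\<^sub>M MY" N N] by simp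
  qed
  have Pk_space: "space (Pk k) = space (M1 \<Otimes>\<^sub>M MY)" if k: "k \<in> {1..K}" for k
    using Pi k by (intro sets_eq_imp_space_eq) auto
  have Pk_prob: "prob_space (Pk k)" if k: "k \<in> {1..K}" for k using Pi k by auto
  have distZ: "distr M N (Z i) = distr (Pk k) N (\<lambda>(x1, y). ((k, x1), y))" if k: "k \<in> {1..K}" and i: "i \<in> blk k" for k i
    using calib k i unfolding blk_def N_def by auto
  have iblk: "i \<in> {1..n+1}" if k: "k \<in> {1..K}" and i: "i \<in> blk k" for k i
    using blk_sub'[OF k] i by auto
  have Zspace: "Z l \<omega> \<in> space N" if "l \<in> {1..n+1}" "\<omega> \<in> space M" for l \<omega>
    using measurable_space[OF Zm[OF that(1)] that(2)] .
  have lab_null: "P.prob {\<omega>\<in>space M. fst (fst (Z i \<omega>)) \<noteq> k} = 0" if k: "k \<in> {1..K}" and i: "i \<in> blk k" for k i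
  proof -
    have S: "{z\<in>space N. fst (fst z) \<noteq> k} \<in> sets N" unfolding N_def by measurable
    have "P.prob {\<omega>\<in>space M. fst (fst (Z i \<omega>)) \<noteq> k} = P.prob (Z i -` {z\<in>space N. fst (fst z) \<noteq> k} \<inter> space M)"
      using Zspace[OF iblk[OF k i]] by (intro arg_cong[where f="P.prob"]) auto
    also have "\<dots> = measure (distr M N (Z i)) {z\<in>space N. fst (fst z) \<noteq> k}"
      by (rule measure_distr[symmetric, OF Zm[OF iblk[OF k i]] S])
    also have "\<dots> = measure (distr (Pk k) N (\<lambda>(x1, y). ((k, x1), y))) {z\<in>space N. fst (fst z) \<noteq> k}"
      by (simp add: distZ[OF k i])
    also have "\<dots> = measure (Pk k) ((\<lambda>(x1, y). ((k, x1), y)) -` {z\<in>space N. fst (fst z) \<noteq> k} \<inter> space (Pk k))"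
      by (rule measure_distr[OF fmeas[OF k] S])
    also have "(\<lambda>(x1, y). ((k, x1), y)) -` {z\<in>space N. fst (fst z) \<noteq> k} \<inter> space (Pk k) = {}" by auto
    finally show ?thesis by simp
  qed
  define L where "L i k = {\<omega>\<in>space M. fst (fst (Z i \<omega>)) \<noteq> k}" for i k
  have L_sets: "L i k \<in> sets M" if "i \<in> {1..n+1}" for i k
  proof -
    note [measurable] = Zm'[OF that]
    show ?thesis unfolding L_def by measurable
  qed
  define Bad where "Bad = (\<Union>k\<in>{1..K}. \<Union>i\<in>blk k. L i k)"
  have Bad_sets: "Bad \<in> sets M" unfolding Bad_def
    using L_sets iblk finblk by (intro sets.finite_UN) auto
  have Good_eq: "Good = space M - Bad" unfolding Good_def Bad_def L_def by auto
  have Good_sets: "Good \<in> sets M" unfolding Good_eq using Bad_sets by auto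
  have Bad_null0: "P.prob Bad = 0"
  proof -
    have "P.prob Bad \<le> (\<Sum>k\<in>{1..K}. P.prob (\<Union>i\<in>blk k. L i k))" unfolding Bad_def
      using L_sets iblk finblk by (intro measure_UNION_le) (auto intro!: sets.finite_UN)
    also have "\<dots> \<le> (\<Sum>k\<in>{1..K}. \<Sum>i\<in>blk k. P.prob (L i k))"
      using L_sets iblk finblk by (intro sum_mono measure_UNION_le) auto
    also have "\<dots> = 0" using lab_null unfolding L_def by simp
    finally show ?thesis by (simp add: antisym)
  qed
  have GoodBad_sets: "space M - Good \<in> sets M" using Good_sets by auto
  have Bad_null: "P.prob (space M - Good) = 0" unfolding Good_eq using Bad_sets Bad_null0
    by (simp add: Diff_Diff_Int Int_absorb1 sets.sets_into_space)
  have Good_group: "gwcp_group n (D \<omega>) j = blk j" if w: "\<omega> \<in> Good" and j: "j \<in> {1..K}" for \<omega> j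
  proof safe
    fix i assume "i \<in> gwcp_group n (D \<omega>) j"
    then have i: "i \<in> {1..n}" "fst (fst (Z i \<omega>)) = j" unfolding gwcp_group_def D_def by auto
    obtain k where k: "k \<in> {1..K}" "i \<in> blk k" using blk_cover'[OF i(1)] by auto
    then have "fst (fst (Z i \<omega>)) = k" using w unfolding Good_def by auto
    then show "i \<in> blk j" using i k by simp
  next
    fix i assume i: "i \<in> blk j"
    then have "fst (fst (Z i \<omega>)) = j" using w j unfolding Good_def by auto
    then show "i \<in> gwcp_group n (D \<omega>) j" using blk_sub'[OF j] i unfolding gwcp_group_def D_def by auto
  qed
  have Good_card: "card (gwcp_group n (D \<omega>) j) = nk j" if "\<omega> \<in> Good" "j \<in> {1..K}" for \<omega> j
    using Good_group[OF that] blk_card'[OF that(2)] by simp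
  define c where "c = (\<Sum>j\<in>{j\<in>{1..K}. nk j = 0}. q j)"
  have Good_qE: "qE K q n (D \<omega>) = c" if "\<omega> \<in> Good" for \<omega>
  proof -
    have "\<forall>j\<in>{1..K}. (card (gwcp_group n (D \<omega>) j) = 0) = (nk j = 0)" using Good_card[OF that] by simp
    then have "{j\<in>{1..K}. card (gwcp_group n (D \<omega>) j) = 0} = {j\<in>{1..K}. nk j = 0}"
      by (intro Collect_cong) blast
    then show ?thesis unfolding qE_def c_def by simp
  qed

  define Tk where "Tk k = {\<omega>\<in>space M. fst (fst (Z (n+1) \<omega>)) = k}" for k
  have n1: "n+1 \<in> {1..n+1}" by simp
  note [measurable] = Zm'[OF n1]
  have Tk_sets: "Tk k \<in> sets M" for k unfolding Tk_def by measurable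
  have Tk_prob: "P.prob (Tk k) = q k" if k: "k \<in> {1..K}" for k
  proof -
    have "P.prob {\<omega>\<in>space M. fst (fst (Z (n+1) \<omega>)) = k
              \<and> (snd (fst (Z (n+1) \<omega>)), snd (Z (n+1) \<omega>)) \<in> space (M1 \<Otimes>\<^sub>M MY)}
          = q k * measure (Pk k) (space (M1 \<Otimes>\<^sub>M MY))"
      using test k by auto
    moreover have "{\<omega>\<in>space M. fst (fst (Z (n+1) \<omega>)) = k
              \<and> (snd (fst (Z (n+1) \<omega>)), snd (Z (n+1) \<omega>)) \<in> space (M1 \<Otimes>\<^sub>M MY)} = Tk k"
      unfolding Tk_def using Zspace[OF n1] by (force simp: N_def space_pair_measure mem_Times_iff)
    moreover have "measure (Pk k) (space (M1 \<Otimes>\<^sub>M MY)) = 1"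
      using Pk_space[OF k] prob_space.prob_space[OF Pk_prob[OF k]] by simp
    ultimately show ?thesis by simp
  qed
  define Out where "Out = {\<omega>\<in>space M. fst (fst (Z (n+1) \<omega>)) \<notin> {1..K}}"
  have labm[measurable]: "(\<lambda>\<omega>. fst (fst (Z (n+1) \<omega>))) \<in> M \<rightarrow>\<^sub>M count_space UNIV" by measurable
  have Out_sets: "Out \<in> sets M"
  proof -
    have "Out = (\<lambda>\<omega>. fst (fst (Z (n+1) \<omega>))) -` (- {1..K}) \<inter> space M" unfolding Out_def by auto
    then show ?thesis using measurable_sets[OF labm, of "- {1..K}"] by simp
  qed
  have Out_null: "P.prob Out = 0"
  proof -
    have "P.prob (\<Union>k\<in>{1..K}. Tk k) = (\<Sum>k\<in>{1..K}. P.prob (Tk k))"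
      using Tk_sets by (intro P.finite_measure_finite_Union) (auto simp: disjoint_family_on_def Tk_def)
    also have "\<dots> = 1" using Tk_prob q_sum by simp
    finally have "P.prob (\<Union>k\<in>{1..K}. Tk k) = 1" .
    moreover have "Out = space M - (\<Union>k\<in>{1..K}. Tk k)" unfolding Out_def Tk_def by auto
    moreover have "(\<Union>k\<in>{1..K}. Tk k) \<in> sets M" using Tk_sets by auto
    ultimately show ?thesis using P.prob_compl by simp
  qed

  define Ms where "Ms = {\<omega>\<in>space M. \<not> snd (Z (n+1) \<omega>) \<in> gwcp_set K q \<alpha> s n (\<lambda>i. Z i \<omega>) (fst (Z (n+1) \<omega>))}"
  have Ms_alt: "Ms = {\<omega>\<in>space M. alk q \<alpha> n (D \<omega>) (fst (fst (Z (n+1) \<omega>))) \<ge> 0 \<and>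
      Tail K q s n (D \<omega>) (s (Z (n+1) \<omega>)) \<le> alk q \<alpha> n (D \<omega>) (fst (fst (Z (n+1) \<omega>)))}"
    unfolding Ms_def gwcp_set_def D_def
    by (intro Collect_cong conj_cong refl) (simp add: miss_iff[OF q_nonneg q_sum])
  have Dm: "(\<lambda>\<omega>. D \<omega> l) \<in> M \<rightarrow>\<^sub>M (count_space UNIV \<Otimes>\<^sub>M M1) \<Otimes>\<^sub>M MY" if "l \<in> {1..n}" for l
    unfolding D_def using Zm'[of l] that by auto
  have alkm[measurable]: "(\<lambda>\<omega>. alk q \<alpha> n (D \<omega>) (fst (fst (Z (n+1) \<omega>)))) \<in> borel_measurable M"
    by (rule measurable_compose_countable[where f="\<lambda>k \<omega>. alk q \<alpha> n (D \<omega>) k"])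
       (rule alk_meas[OF Dm], assumption, measurable)
  have Tailm[measurable]: "(\<lambda>\<omega>. Tail K q s n (D \<omega>) (t \<omega>)) \<in> borel_measurable M" if "t \<in> borel_measurable M" for t
    by (rule Tail_meas[OF Dm that s_meas])
  have [measurable]: "(\<lambda>\<omega>. s (Z (n+1) \<omega>)) \<in> borel_measurable M" using s_meas by measurable
  have Ms_sets: "Ms \<in> sets M" unfolding Ms_alt by measurable

  define E where "E k i = {\<omega>\<in>space M. fst (fst (Z i \<omega>)) = k \<and> Tail K q s n (D \<omega>) (s (Z i \<omega>)) \<le> \<alpha>}" for k i
  have E_sets: "E k i \<in> sets M" if i: "i \<in> {1..n}" for k i
  proof -
    have i1: "i \<in> {1..n+1}" using i by auto
    note [measurable] = Zm'[OF i1]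
    have [measurable]: "(\<lambda>\<omega>. s (Z i \<omega>)) \<in> borel_measurable M" using s_meas by measurable
    show ?thesis unfolding E_def by measurable
  qed

  have claimA: "P.prob (Ms \<inter> Tk k) \<le> q k * P.prob (E k i)" if k: "k \<in> {1..K}" and i: "i \<in> blk k" for k i
  proof -
    have in1: "i \<in> {1..n}" using blk_sub'[OF k] i by auto
    define J where "J = {1..n} - {i}"
    define PJ where "PJ = PiM J (\<lambda>_. N)"
    define V where "V \<omega> = restrict (\<lambda>l. Z l \<omega>) J" for \<omega>
    define mrg where "mrg v z = (\<lambda>l. if l = i then z else v l)" for v :: "nat \<Rightarrow> (nat \<times> 'x) \<times> 'y" and z
    define N0 where "N0 = PiM {0::nat} (\<lambda>_. N)"
    define emb where "emb z = restrict (\<lambda>_::nat. z) {0::nat}" for z :: "(nat \<times> 'x) \<times> 'y"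
    have embm: "emb \<in> N \<rightarrow>\<^sub>M N0" unfolding emb_def N0_def by (rule measurable_restrict) auto
    have embm2: "(\<lambda>f. emb (f l)) \<in> PiM {l} (\<lambda>_. N) \<rightarrow>\<^sub>M N0" for l
    proof -
      have "(\<lambda>f. f l) \<in> PiM {l} (\<lambda>_. N) \<rightarrow>\<^sub>M N" by (rule measurable_component_singleton) simp
      then show ?thesis by (rule measurable_compose[OF _ embm])
    qed
    define W where "W \<omega> = emb (Z (n+1) \<omega>)" for \<omega>
    define W' where "W' \<omega> = emb (Z i \<omega>)" for \<omega>
    have iv1: "P.indep_var PJ V N0 W"
    proof -
      have "P.indep_var PJ V (PiM {n+1} (\<lambda>_. N)) (\<lambda>\<omega>. restrict (\<lambda>l. Z l \<omega>) {n+1})"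
        unfolding PJ_def V_def by (rule P.indep_var_restrict[OF indep']) (auto simp: J_def)
      then have "P.indep_var PJ (id \<circ> V) N0 ((\<lambda>f. emb (f (n+1))) \<circ> (\<lambda>\<omega>. restrict (\<lambda>l. Z l \<omega>) {n+1}))"
        by (rule P.indep_var_compose) (auto intro: embm2)
      moreover have "(\<lambda>f. emb (f (n+1))) \<circ> (\<lambda>\<omega>. restrict (\<lambda>l. Z l \<omega>) {n+1}) = W" by (auto simp: fun_eq_iff W_def)
      ultimately show ?thesis by simp
    qed
    have iv2: "P.indep_var PJ V N0 W'"
    proof -
      have "P.indep_var PJ V (PiM {i} (\<lambda>_. N)) (\<lambda>\<omega>. restrict (\<lambda>l. Z l \<omega>) {i})"
        unfolding PJ_def V_def using in1 by (intro P.indep_var_restrict[OF indep']) (auto simp: J_def)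
      then have "P.indep_var PJ (id \<circ> V) N0 ((\<lambda>f. emb (f i)) \<circ> (\<lambda>\<omega>. restrict (\<lambda>l. Z l \<omega>) {i}))"
        by (rule P.indep_var_compose) (auto intro: embm2)
      moreover have "(\<lambda>f. emb (f i)) \<circ> (\<lambda>\<omega>. restrict (\<lambda>l. Z l \<omega>) {i}) = W'" by (auto simp: fun_eq_iff W'_def)
      ultimately show ?thesis by simp
    qed
    define G where "G = {p\<in>space (PJ \<Otimes>\<^sub>M N0). fst (fst (snd p 0)) = k \<and> Tail K q s n (mrg (fst p) (snd p 0)) (s (snd p 0)) \<le> \<alpha>}"
    have Gsets: "G \<in> sets (PJ \<Otimes>\<^sub>M N0)"
    proof -
      have sn0: "(\<lambda>p. snd p 0) \<in> (PJ \<Otimes>\<^sub>M N0) \<rightarrow>\<^sub>M N"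
      proof -
        have "(\<lambda>v. v 0) \<in> N0 \<rightarrow>\<^sub>M N" unfolding N0_def by (rule measurable_component_singleton) simp
        then show ?thesis by (rule measurable_compose[OF measurable_snd])
      qed
      have Dm2: "(\<lambda>p. mrg (fst p) (snd p 0) l) \<in> (PJ \<Otimes>\<^sub>M N0) \<rightarrow>\<^sub>M (count_space UNIV \<Otimes>\<^sub>M M1) \<Otimes>\<^sub>M MY"
        if l: "l \<in> {1..n}" for l
      proof (cases "l = i")
        case True
        then show ?thesis using sn0 unfolding mrg_def N_def by simp
      next
        case False
        then have "l \<in> J" using l unfolding J_def by auto
        then have "(\<lambda>v. v l) \<in> PJ \<rightarrow>\<^sub>M N" unfolding PJ_def by (rule measurable_component_singleton)
        then have "(\<lambda>p. fst p l) \<in> (PJ \<Otimes>\<^sub>M N0) \<rightarrow>\<^sub>M N" by (rule measurable_compose[OF measurable_fst])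
        then show ?thesis using False unfolding mrg_def N_def by simp
      qed
      have s2: "(\<lambda>p. s (snd p 0)) \<in> borel_measurable (PJ \<Otimes>\<^sub>M N0)" by (rule measurable_compose[OF sn0 sm])
      have [measurable]: "(\<lambda>p. Tail K q s n (mrg (fst p) (snd p 0)) (s (snd p 0))) \<in> borel_measurable (PJ \<Otimes>\<^sub>M N0)"
        by (rule Tail_meas[OF Dm2 s2 s_meas])
      have lm: "(\<lambda>z. fst (fst z)) \<in> N \<rightarrow>\<^sub>M count_space UNIV" unfolding N_def by measurable
      have [measurable]: "(\<lambda>p. fst (fst (snd p 0))) \<in> (PJ \<Otimes>\<^sub>M N0) \<rightarrow>\<^sub>M count_space UNIV"
        by (rule measurable_compose[OF sn0 lm])
      show ?thesis unfolding G_def by measurable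
    qed
    have Gsub: "G \<subseteq> {p. fst (fst (snd p 0)) = k}" unfolding G_def by auto
    have h0: "emeasure M (Z (n+1) -` B \<inter> space M) = ennreal (q k) * emeasure M (Z i -` B \<inter> space M)"
      if B: "B \<in> sets N" "B \<subseteq> {z. fst (fst z) = k}" for B
    proof -
      define f where "f = (\<lambda>(x1::'x, y::'y). ((k::nat, x1), y))"
      have fm: "f \<in> (M1 \<Otimes>\<^sub>M MY) \<rightarrow>\<^sub>M N" unfolding f_def N_def by measurable
      define A where "A = f -` B \<inter> space (M1 \<Otimes>\<^sub>M MY)"
      have A: "A \<in> sets (M1 \<Otimes>\<^sub>M MY)" unfolding A_def using measurable_sets[OF fm B(1)] .
      have fz: "f (snd (fst z), snd z) = z" if "fst (fst z) = k" for z
        using that unfolding f_def by (cases z) auto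
      have e1: "Z (n+1) -` B \<inter> space M = {\<omega>\<in>space M. fst (fst (Z (n+1) \<omega>)) = k
                      \<and> (snd (fst (Z (n+1) \<omega>)), snd (Z (n+1) \<omega>)) \<in> A}"
      proof (rule set_eqI, rule iffI)
        fix \<omega> assume "\<omega> \<in> Z (n+1) -` B \<inter> space M"
        then have w: "\<omega> \<in> space M" "Z (n+1) \<omega> \<in> B" by auto
        then have lk: "fst (fst (Z (n+1) \<omega>)) = k" using B(2) by auto
        have "Z (n+1) \<omega> \<in> space N" using Zspace[OF n1 w(1)] .
        then have "(snd (fst (Z (n+1) \<omega>)), snd (Z (n+1) \<omega>)) \<in> space (M1 \<Otimes>\<^sub>M MY)"
          unfolding N_def by (auto simp: space_pair_measure mem_Times_iff)
        then have "(snd (fst (Z (n+1) \<omega>)), snd (Z (n+1) \<omega>)) \<in> A"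
          unfolding A_def using fz[OF lk] w(2) by simp
        then show "\<omega> \<in> {\<omega>\<in>space M. fst (fst (Z (n+1) \<omega>)) = k
                      \<and> (snd (fst (Z (n+1) \<omega>)), snd (Z (n+1) \<omega>)) \<in> A}" using w lk by simp
      next
        fix \<omega> assume "\<omega> \<in> {\<omega>\<in>space M. fst (fst (Z (n+1) \<omega>)) = k
                      \<and> (snd (fst (Z (n+1) \<omega>)), snd (Z (n+1) \<omega>)) \<in> A}"
        then have w: "\<omega> \<in> space M" "fst (fst (Z (n+1) \<omega>)) = k" "(snd (fst (Z (n+1) \<omega>)), snd (Z (n+1) \<omega>)) \<in> A"
          by auto
        then show "\<omega> \<in> Z (n+1) -` B \<inter> space M" unfolding A_def using fz[OF w(2)] by auto
      qed
      have p1: "P.prob (Z (n+1) -` B \<inter> space M) = q k * measure (Pk k) A"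
        unfolding e1 using test k A by auto
      have "P.prob (Z i -` B \<inter> space M) = measure (distr M N (Z i)) B"
        by (rule measure_distr[symmetric, OF Zm[OF iblk[OF k i]] B(1)])
      also have "\<dots> = measure (distr (Pk k) N f) B" using distZ[OF k i] unfolding f_def by simp
      also have "\<dots> = measure (Pk k) (f -` B \<inter> space (Pk k))"
        by (rule measure_distr[OF fmeas[OF k, folded f_def] B(1)])
      also have "\<dots> = measure (Pk k) A" unfolding A_def Pk_space[OF k] ..
      finally have p2: "P.prob (Z i -` B \<inter> space M) = measure (Pk k) A" .
      show ?thesis unfolding P.emeasure_eq_measure p1 p2 using qk0[OF k]
        by (simp add: ennreal_mult)
    qed
    have Wsp: "Z l \<omega> \<in> space N \<Longrightarrow> emb (Z l \<omega>) \<in> space N0" for l \<omega> using measurable_space[OF embm] by blast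
    have emb0: "emb z 0 = z" for z unfolding emb_def by simp
    have h: "emeasure M (W -` B \<inter> space M) = ennreal (q k) * emeasure M (W' -` B \<inter> space M)"
      if B: "B \<in> sets N0" "B \<subseteq> {z. fst (fst (z 0)) = k}" for B
    proof -
      define B' where "B' = emb -` B \<inter> space N"
      have B': "B' \<in> sets N" unfolding B'_def using measurable_sets[OF embm B(1)] .
      have B's: "B' \<subseteq> {z. fst (fst z) = k}" unfolding B'_def using B(2) emb0 by auto
      have "W -` B \<inter> space M = Z (n+1) -` B' \<inter> space M" unfolding W_def B'_def using Zspace[OF n1] by auto
      moreover have "W' -` B \<inter> space M = Z i -` B' \<inter> space M" unfolding W'_def B'_def using Zspace[OF iblk[OF k i]] by auto
      ultimately show ?thesis using h0[OF B' B's] by simp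
    qed
    have core: "emeasure M ((\<lambda>\<omega>. (V \<omega>, W \<omega>)) -` G \<inter> space M) = ennreal (q k) * emeasure M ((\<lambda>\<omega>. (V \<omega>, W' \<omega>)) -` G \<inter> space M)"
      by (rule P.swap_core[OF iv1 iv2 Gsets Gsub h]) auto
    define Et where "Et = (\<lambda>\<omega>. (V \<omega>, W \<omega>)) -` G \<inter> space M"
    have Vm: "V \<in> M \<rightarrow>\<^sub>M PJ" using iv1 P.indep_var_rv1 by blast
    have pair_sp: "(V \<omega>, emb (Z l \<omega>)) \<in> space (PJ \<Otimes>\<^sub>M N0)" if "\<omega> \<in> space M" "l \<in> {1..n+1}" for \<omega> l
      using measurable_space[OF Vm that(1)] Wsp[OF Zspace[OF that(2,1)]] by (simp add: space_pair_measure)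
    have agree_i: "\<forall>l\<in>{1..n}. mrg (V \<omega>) (Z i \<omega>) l = D \<omega> l" for \<omega>
      unfolding mrg_def V_def D_def J_def by auto
    have Ei: "(\<lambda>\<omega>. (V \<omega>, W' \<omega>)) -` G \<inter> space M = E k i"
      unfolding G_def E_def W'_def using pair_sp[OF _ iblk[OF k i]] Tail_cong[OF agree_i] by (auto simp: emb0)
    have Et_sets: "Et \<in> sets M"
    proof -
      have "W \<in> M \<rightarrow>\<^sub>M N0" unfolding W_def by (rule measurable_compose[OF Zm[OF n1] embm])
      then have "(\<lambda>\<omega>. (V \<omega>, W \<omega>)) \<in> M \<rightarrow>\<^sub>M (PJ \<Otimes>\<^sub>M N0)" using Vm by measurable
      then show ?thesis unfolding Et_def using measurable_sets Gsets by blast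
    qed
    have pr: "P.prob Et = q k * P.prob (E k i)"
    proof -
      have "ennreal (P.prob Et) = ennreal (q k) * ennreal (P.prob (E k i))"
        using core unfolding Et_def[symmetric] Ei P.emeasure_eq_measure .
      also have "\<dots> = ennreal (q k * P.prob (E k i))" using qk0[OF k] by (simp add: ennreal_mult)
      finally show ?thesis using qk0[OF k] by (simp add: ennreal_inj)
    qed
    have sub: "Ms \<inter> Tk k \<subseteq> Et \<union> (space M - Good)"
    proof
      fix \<omega> assume w: "\<omega> \<in> Ms \<inter> Tk k"
      show "\<omega> \<in> Et \<union> (space M - Good)"
      proof (cases "\<omega> \<in> Good")
        case False then show ?thesis using w unfolding Ms_def by auto
      next
        case True
        have wM: "\<omega> \<in> space M" using w unfolding Ms_def by auto
        have lab: "fst (fst (Z (n+1) \<omega>)) = k" using w unfolding Tk_def by auto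
        have miss: "Tail K q s n (D \<omega>) (s (Z (n+1) \<omega>)) \<le> alk q \<alpha> n (D \<omega>) k"
          using w lab unfolding Ms_alt by auto
        have ig: "i \<in> gwcp_group n (D \<omega>) k" using Good_group[OF True k] i by simp
        have "Tail K q s n ((D \<omega>)(i := Z (n+1) \<omega>)) (s (Z (n+1) \<omega>)) \<le> \<alpha>"
          by (rule L3[OF k q_nonneg lab ig miss])
        moreover have "\<forall>l\<in>{1..n}. mrg (V \<omega>) (Z (n+1) \<omega>) l = ((D \<omega>)(i := Z (n+1) \<omega>)) l"
          unfolding mrg_def V_def D_def J_def by auto
        ultimately have "Tail K q s n (mrg (V \<omega>) (Z (n+1) \<omega>)) (s (Z (n+1) \<omega>)) \<le> \<alpha>"
          using Tail_cong by metis
        then have "\<omega> \<in> Et" unfolding Et_def G_def W_def using pair_sp[OF wM n1] lab wM by (auto simp: emb0)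
        then show ?thesis by simp
      qed
    qed
    have "P.prob (Ms \<inter> Tk k) \<le> P.prob (Et \<union> (space M - Good))"
      using Et_sets GoodBad_sets by (intro P.finite_measure_mono[OF sub]) auto
    also have "\<dots> \<le> P.prob Et + P.prob (space M - Good)"
      using Et_sets GoodBad_sets by (intro measure_Un_le) auto
    finally show ?thesis using Bad_null pr by simp
  qed
  have claimA': "P.prob (Ms \<inter> Tk k) \<le> q k / real (nk k) * (\<Sum>i\<in>blk k. P.prob (E k i))"
    if k: "k \<in> {1..K}" and nk: "nk k > 0" for k
  proof -
    have "real (nk k) * P.prob (Ms \<inter> Tk k) = (\<Sum>i\<in>blk k. P.prob (Ms \<inter> Tk k))"
      using blk_card'[OF k] by simp
    also have "\<dots> \<le> (\<Sum>i\<in>blk k. q k * P.prob (E k i))" using claimA[OF k] by (intro sum_mono) auto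
    finally have "real (nk k) * P.prob (Ms \<inter> Tk k) \<le> q k * (\<Sum>i\<in>blk k. P.prob (E k i))"
      by (simp add: sum_distrib_left)
    then show ?thesis using nk by (simp add: field_simps)
  qed
  have claimB: "P.prob (Ms \<inter> Tk k) \<le> (if c \<le> \<alpha> then q k else 0)" if k: "k \<in> {1..K}" and nk: "nk k = 0" for k
  proof (cases "c \<le> \<alpha>")
    case True
    have "P.prob (Ms \<inter> Tk k) \<le> P.prob (Tk k)" using Tk_sets by (intro P.finite_measure_mono) auto
    then show ?thesis using True Tk_prob[OF k] by simp
  next
    case False
    have "Ms \<inter> Tk k \<subseteq> space M - Good"
    proof
      fix \<omega> assume w: "\<omega> \<in> Ms \<inter> Tk k"
      show "\<omega> \<in> space M - Good"
      proof (rule ccontr)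
        assume "\<omega> \<notin> space M - Good"
        then have g: "\<omega> \<in> Good" using w unfolding Ms_def by auto
        have lab: "fst (fst (Z (n+1) \<omega>)) = k" using w unfolding Tk_def by auto
        have miss: "Tail K q s n (D \<omega>) (s (Z (n+1) \<omega>)) \<le> alk q \<alpha> n (D \<omega>) k"
          using w lab unfolding Ms_alt by auto
        have "card (gwcp_group n (D \<omega>) k) = 0" using Good_card[OF g k] nk by simp
        from L4[OF q_nonneg this miss] have "qE K q n (D \<omega>) \<le> \<alpha>" .
        then show False using Good_qE[OF g] False by simp
      qed
    qed
    then have "P.prob (Ms \<inter> Tk k) \<le> P.prob (space M - Good)"
      using GoodBad_sets by (intro P.finite_measure_mono) auto
    then show ?thesis using Bad_null False by simp
  qed
  have claimC: "(\<Sum>k\<in>{k\<in>{1..K}. nk k > 0}. q k / real (nk k) * (\<Sum>i\<in>blk k. P.prob (E k i)))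
      \<le> \<alpha> - (if c \<le> \<alpha> then c else 0)"
  proof -
    define Kp where "Kp = {k\<in>{1..K}. nk k > 0}"
    define F where "F \<omega> = (\<Sum>k\<in>Kp. q k / real (nk k) * (\<Sum>i\<in>blk k. indicator (E k i) \<omega> :: real))" for \<omega>
    have Eset: "E k i \<in> sets M" if "k \<in> Kp" "i \<in> blk k" for k i
    proof -
      have "k \<in> {1..K}" using that(1) unfolding Kp_def by auto
      then have "i \<in> {1..n}" using blk_sub' that(2) by blast
      then show ?thesis by (rule E_sets)
    qed
    have intI: "integrable M (\<lambda>\<omega>. \<Sum>i\<in>blk k. indicator (E k i) \<omega> :: real)" if "k \<in> Kp" for k
    proof (rule Bochner_Integration.integrable_sum)
      fix i assume "i \<in> blk k"
      then have "E k i \<in> sets M" using Eset[OF that] by auto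
      then show "integrable M (\<lambda>\<omega>. indicator (E k i) \<omega> :: real)"
        by (auto simp: integrable_indicator_iff Int_absorb2 sets.sets_into_space P.emeasure_finite less_top[symmetric])
    qed
    have "integral\<^sup>L M F = (\<Sum>k\<in>Kp. integral\<^sup>L M (\<lambda>\<omega>. q k / real (nk k) * (\<Sum>i\<in>blk k. indicator (E k i) \<omega> :: real)))"
      unfolding F_def using intI by (intro Bochner_Integration.integral_sum) auto
    also have "\<dots> = (\<Sum>k\<in>Kp. q k / real (nk k) * (\<Sum>i\<in>blk k. P.prob (E k i)))"
    proof (intro sum.cong refl)
      fix k assume k: "k \<in> Kp"
      have "integral\<^sup>L M (\<lambda>\<omega>. \<Sum>i\<in>blk k. indicator (E k i) \<omega> :: real) = (\<Sum>i\<in>blk k. integral\<^sup>L M (indicator (E k i) :: _ \<Rightarrow> real))"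
      proof (rule Bochner_Integration.integral_sum)
        fix i assume "i \<in> blk k"
        then have "E k i \<in> sets M" using Eset[OF k] by auto
        then show "integrable M (\<lambda>\<omega>. indicator (E k i) \<omega> :: real)"
          by (auto simp: integrable_indicator_iff Int_absorb2 sets.sets_into_space P.emeasure_finite less_top[symmetric])
      qed
      also have "\<dots> = (\<Sum>i\<in>blk k. P.prob (E k i))"
        using Eset[OF k] by (intro sum.cong refl) (simp add: integral_indicator Int_absorb2 sets.sets_into_space)
      finally show "integral\<^sup>L M (\<lambda>\<omega>. q k / real (nk k) * (\<Sum>i\<in>blk k. indicator (E k i) \<omega> :: real)) = q k / real (nk k) * (\<Sum>i\<in>blk k. P.prob (E k i))"
        by simp
    qed
    finally have intF: "integral\<^sup>L M F = (\<Sum>k\<in>Kp. q k / real (nk k) * (\<Sum>i\<in>blk k. P.prob (E k i)))" .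
    have intF': "integrable M F" unfolding F_def
    proof (rule Bochner_Integration.integrable_sum)
      fix k assume k: "k \<in> Kp"
      show "integrable M (\<lambda>\<omega>. q k / real (nk k) * (\<Sum>i\<in>blk k. indicator (E k i) \<omega> :: real))"
        by (rule Bochner_Integration.integrable_mult_right) (rule intI[OF k])
    qed
    have nullB: "space M - Good \<in> null_sets M"
      using GoodBad_sets Bad_null by (simp add: null_sets_def P.emeasure_eq_measure)
    have AEb: "AE \<omega> in M. F \<omega> \<le> \<alpha> - (if c \<le> \<alpha> then c else 0)"
    proof (rule AE_I'[OF nullB])
      show "{\<omega> \<in> space M. \<not> F \<omega> \<le> \<alpha> - (if c \<le> \<alpha> then c else 0)} \<subseteq> space M - Good"
      proof safe
        fix \<omega> assume w: "\<omega> \<in> space M" "\<not> F \<omega> \<le> \<alpha> - (if c \<le> \<alpha> then c else 0)" "\<omega> \<in> Good"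
        have Kp_eq: "{j\<in>{1..K}. card (gwcp_group n (D \<omega>) j) > 0} = Kp"
          unfolding Kp_def using Good_card[OF w(3)] by auto
        have cnt: "(\<Sum>i\<in>blk k. indicator (E k i) \<omega> :: real)
            = real (card {i\<in>gwcp_group n (D \<omega>) k. Tail K q s n (D \<omega>) (s (D \<omega> i)) \<le> \<alpha>})" if k: "k \<in> Kp" for k
        proof -
          have k1: "k \<in> {1..K}" using k unfolding Kp_def by auto
          have "(\<Sum>i\<in>blk k. indicator (E k i) \<omega> :: real) = (\<Sum>i\<in>blk k. if Tail K q s n (D \<omega>) (s (D \<omega> i)) \<le> \<alpha> then 1 else 0)"
          proof (intro sum.cong refl)
            fix i assume i: "i \<in> blk k"
            have "fst (fst (Z i \<omega>)) = k" using w(3) k1 i unfolding Good_def by auto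
            then show "indicator (E k i) \<omega> = (if Tail K q s n (D \<omega>) (s (D \<omega> i)) \<le> \<alpha> then 1 else (0::real))"
              using w(1) unfolding E_def D_def by (simp add: indicator_def)
          qed
          also have "\<dots> = real (card {i\<in>blk k. Tail K q s n (D \<omega>) (s (D \<omega> i)) \<le> \<alpha>})"
            by (rule card_filter_sum[symmetric]) (rule finblk)
          finally show ?thesis using Good_group[OF w(3) k1] by simp
        qed
        have "F \<omega> = (\<Sum>j\<in>{j\<in>{1..K}. card (gwcp_group n (D \<omega>) j) > 0}.
            q j / real (card (gwcp_group n (D \<omega>) j)) * real (card {i\<in>gwcp_group n (D \<omega>) j. Tail K q s n (D \<omega>) (s (D \<omega> i)) \<le> \<alpha>}))"
          unfolding Kp_eq F_def using cnt Good_card[OF w(3)] unfolding Kp_def by (intro sum.cong refl) auto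
        also have "\<dots> \<le> \<alpha> - (if qE K q n (D \<omega>) \<le> \<alpha> then qE K q n (D \<omega>) else 0)"
          using L5[OF q_nonneg, of \<alpha> n "D \<omega>" s] alpha by simp
        finally have Fle: "F \<omega> \<le> \<alpha> - (if qE K q n (D \<omega>) \<le> \<alpha> then qE K q n (D \<omega>) else 0)" .
        from Fle[unfolded Good_qE[OF w(3)]] w(2) show False by simp
      qed
    qed
    have "integral\<^sup>L M F \<le> integral\<^sup>L M (\<lambda>_. \<alpha> - (if c \<le> \<alpha> then c else 0))"
      by (rule integral_mono_AE[OF intF' _ AEb]) simp
    also have "\<dots> = \<alpha> - (if c \<le> \<alpha> then c else 0)" by (simp add: P.prob_space)
    finally show ?thesis unfolding intF Kp_def .
  qed

  have "P.prob Ms \<le> P.prob ((\<Union>k\<in>{1..K}. Ms \<inter> Tk k) \<union> Out)"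
    using Ms_sets Tk_sets Out_sets by (intro P.finite_measure_mono) (auto simp: Tk_def Out_def Ms_def)
  also have "\<dots> \<le> P.prob (\<Union>k\<in>{1..K}. Ms \<inter> Tk k) + P.prob Out"
    using Ms_sets Tk_sets Out_sets by (intro measure_Un_le) auto
  also have "\<dots> \<le> (\<Sum>k\<in>{1..K}. P.prob (Ms \<inter> Tk k))"
    using Ms_sets Tk_sets Out_null measure_UNION_le[of "{1..K}" "\<lambda>k. Ms \<inter> Tk k" M] by auto
  finally have "P.prob Ms \<le> (\<Sum>k\<in>{1..K}. P.prob (Ms \<inter> Tk k))" .
  also have "\<dots> = (\<Sum>k\<in>{k\<in>{1..K}. nk k > 0}. P.prob (Ms \<inter> Tk k)) + (\<Sum>k\<in>{k\<in>{1..K}. \<not> nk k > 0}. P.prob (Ms \<inter> Tk k))"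
    by (rule sum_split_P) simp
  also have "\<dots> \<le> (\<Sum>k\<in>{k\<in>{1..K}. nk k > 0}. q k / real (nk k) * (\<Sum>i\<in>blk k. P.prob (E k i)))
      + (\<Sum>k\<in>{k\<in>{1..K}. \<not> nk k > 0}. (if c \<le> \<alpha> then q k else 0))"
    using claimA' claimB by (intro add_mono sum_mono) auto
  also have "(\<Sum>k\<in>{k\<in>{1..K}. \<not> nk k > 0}. (if c \<le> \<alpha> then q k else 0)) = (if c \<le> \<alpha> then c else 0)"
    unfolding c_def by simp
  finally have PMs: "P.prob Ms \<le> \<alpha>" using claimC by simp

  have "{\<omega> \<in> space M. snd (Z (n+1) \<omega>) \<in> gwcp_set K q \<alpha> s n (\<lambda>i. Z i \<omega>) (fst (Z (n+1) \<omega>))} = space M - Ms"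
    unfolding Ms_def by auto
  then have "measure M {\<omega> \<in> space M. snd (Z (n+1) \<omega>) \<in> gwcp_set K q \<alpha> s n (\<lambda>i. Z i \<omega>) (fst (Z (n+1) \<omega>))} = 1 - P.prob Ms"
    using P.prob_compl[OF Ms_sets] by simp
  then show ?thesis using PMs by simp
qed

end
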